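(* Let $q\ge 2$, $n\ge 1$, $f:\mathbb{Z}_q^n\to\mathbb{R}$, let $M$ be the $q$-ary Möbius transform of $f$, and let $I^{SV}(i)$ be the Shapley value of feature $i\in D$ for the associated value function $v$. Then for every $i\in D$, $$I^{SV}(i)\;=\;-\sum_{\substack{\mathbf{k}\in\mathbb{Z}_q^n\\ k_i\neq 0}}\frac{1}{\|\mathbf{k}\|_0\, q^{\|\mathbf{k}\|_0}}\,M[\mathbf{k}].$$
   Context: Elements of $\mathbb{Z}_q^n$ are vectors $\mathbf{m}=(m_1,\dots,m_n)$ with $m_i\in\{0,1,\dots,q-1\}$. $D=\{1,\dots,n\}$, and for $T\subseteq D$, $\bar T=D\setminus T$. $\|\mathbf{k}\|_0$ is the number of nonzero coordinates of $\mathbf{k}$. Partial order: $\mathbf{m}\le\mathbf{k}$ iff for every $i$, $m_i=k_i$ or $m_i=0$; in that case $\mathbf{k}-\mathbf{m}$ is the coordinatewise integer difference. The $q$-ary Möbius transform of $f$ is $M[\mathbf{k}]=\sum_{\mathbf{m}\le\mathbf{k}}(-1)^{\|\mathbf{k}-\mathbf{m}\|_0} f(\mathbf{m})$. The value function (query encoded as the all-zeros vector, uniform marginalization of absent features) is $v_T=\frac{1}{q^{|\bar T|}}\sum_{\mathbf{r}\in\mathbb{Z}_q^n:\ \mathbf{r}_T=\mathbf{0}} f(\mathbf{r})$ for $T\subseteq D$. The Shapley value is $I^{SV}(i)=\sum_{T\subseteq D\setminus\{i\}}\frac{|T|!\,(n-|T|-1)!}{n!}\big[v_{T\cup\{i\}}-v_T\big]$.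 *)

theory Defs
  imports "HOL-Analysis.Analysis"
begin

text \<open>Elements of Z_q^n are represented as functions nat => nat that vanish outside
  D = {1..n} and take values in {0..q-1} on D.\<close>

definition Zqn :: "nat \<Rightarrow> nat \<Rightarrow> (nat \<Rightarrow> nat) set" where
  "Zqn q n = {m. (\<forall>i\<in>{1..n}. m i < q) \<and> (\<forall>i. i \<notin> {1..n} \<longrightarrow> m i = 0)}"

definition supp0 :: "nat \<Rightarrow> (nat \<Rightarrow> nat) \<Rightarrow> nat set" where
  "supp0 n k = {i\<in>{1..n}. k i \<noteq> 0}"

definition norm0 :: "nat \<Rightarrow> (nat \<Rightarrow> nat) \<Rightarrow> nat" where
  "norm0 n k = card (supp0 n k)"

definition qle :: "nat \<Rightarrow> (nat \<Rightarrow> nat) \<Rightarrow> (nat \<Rightarrow> nat) \<Rightarrow> bool" where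
  "qle n m k \<longleftrightarrow> (\<forall>i\<in>{1..n}. m i = k i \<or> m i = 0)"

definition mobius :: "nat \<Rightarrow> nat \<Rightarrow> ((nat \<Rightarrow> nat) \<Rightarrow> real) \<Rightarrow> (nat \<Rightarrow> nat) \<Rightarrow> real" where
  "mobius q n f k = (\<Sum>m\<in>{m\<in>Zqn q n. qle n m k}.
      (-1) ^ norm0 n (\<lambda>i. k i - m i) * f m)"

definition valfun :: "nat \<Rightarrow> nat \<Rightarrow> ((nat \<Rightarrow> nat) \<Rightarrow> real) \<Rightarrow> nat set \<Rightarrow> real" where
  "valfun q n f T = (1 / real q ^ card ({1..n} - T)) *
      (\<Sum>r\<in>{r\<in>Zqn q n. \<forall>i\<in>T. r i = 0}. f r)"

definition shapley :: "nat \<Rightarrow> nat \<Rightarrow> ((nat \<Rightarrow> nat) \<Rightarrow> real) \<Rightarrow> nat \<Rightarrow> real" where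
  "shapley q n f i = (\<Sum>T\<in>Pow ({1..n} - {i}).
      (fact (card T) * fact (n - card T - 1) / fact n) *
      (valfun q n f (insert i T) - valfun q n f T))"

end

theory Submission
  imports Defs
begin

lemma nat_ident:
  fixes N s :: nat assumes "s \<ge> 1"
  shows "s * (\<Sum>t\<le>N. (N choose t) * fact t * fact (N + s - t - 1)) = (fact (N + s) :: nat)"
proof -
  have trm: "(N choose t) * fact t * fact (N + s - t - 1) = fact N * fact (s - 1) * ((s - 1 + (N - t)) choose (N - t))"
    if "t \<le> N" for t
  proof -
    have e1: "fact (N - t) * fact (s - 1) * ((s - 1 + (N - t)) choose (N - t)) = (fact (s - 1 + (N - t)) :: nat)"
      using binomial_fact_lemma[of "N - t" "s - 1 + (N - t)"] by simp
    have e2: "fact t * fact (N - t) * (N choose t) = (fact N :: nat)"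
      using binomial_fact_lemma[OF that] .
    have e3: "N + s - t - 1 = s - 1 + (N - t)" using that assms by simp
    show ?thesis unfolding e3 e1[symmetric] e2[symmetric] by (simp add: mult_ac)
  qed
  have "(\<Sum>t\<le>N. (N choose t) * fact t * fact (N + s - t - 1)) =
        (\<Sum>t\<le>N. fact N * fact (s - 1) * ((s - 1 + (N - t)) choose (N - t)))"
    by (intro sum.cong refl trm) simp
  also have "\<dots> = fact N * fact (s - 1) * (\<Sum>t\<le>N. ((s - 1 + (N - t)) choose (N - t)))"
    by (simp add: sum_distrib_left)
  also have "(\<Sum>t\<le>N. ((s - 1 + (N - t)) choose (N - t))) = (\<Sum>t\<le>N. ((s - 1 + t) choose t))"
    using sum.atLeastAtMost_rev[of "\<lambda>t. (s - 1 + t) choose t" 0 N]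
    by (simp add: atMost_atLeast0)
  also have "\<dots> = Suc (s - 1 + N) choose N" by (rule sum_choose_lower)
  also have "Suc (s - 1 + N) = N + s" using assms by simp
  finally have "s * (\<Sum>t\<le>N. (N choose t) * fact t * fact (N + s - t - 1)) = fact N * (s * fact (s - 1)) * ((N + s) choose N)"
    by (simp add: mult_ac)
  also have "s * fact (s - 1) = (fact s :: nat)" using assms
    by (cases s) simp_all
  also have "fact N * fact s * ((N + s) choose N) = (fact (N + s) :: nat)"
    using binomial_fact_lemma[of N "N + s"] by simp
  finally show ?thesis .
qed

lemma weight_sum:
  fixes X :: "nat set" and s :: nat
  assumes "finite X" "s \<ge> 1"
  shows "(\<Sum>T\<in>Pow X. fact (card T) * fact (card X + s - card T - 1) / fact (card X + s)) = 1 / (real s)"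
proof -
  let ?N = "card X"
  let ?h = "\<lambda>t. fact t * fact (?N + s - t - 1) / (fact (?N + s) :: real)"
  have "(\<Sum>T\<in>Pow X. ?h (card T)) = (\<Sum>t\<le>?N. (\<Sum>T\<in>{T. T \<in> Pow X \<and> card T = t}. ?h (card T)))"
    by (rule sum.group[symmetric]) (auto simp: assms card_mono)
  also have "\<dots> = (\<Sum>t\<le>?N. real (?N choose t) * ?h t)"
  proof (rule sum.cong[OF refl])
    fix t
    have "{T. T \<in> Pow X \<and> card T = t} = {B. B \<subseteq> X \<and> card B = t}" by auto
    then show "(\<Sum>T\<in>{T. T \<in> Pow X \<and> card T = t}. ?h (card T)) = real (?N choose t) * ?h t"
      using n_subsets[OF assms(1), of t] by simp
  qed
  also have "\<dots> = real (\<Sum>t\<le>?N. (?N choose t) * fact t * fact (?N + s - t - 1)) / fact (?N + s)"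
    unfolding of_nat_sum sum_divide_distrib by (intro sum.cong refl) (simp add: mult.assoc)
  also have "\<dots> = 1 / real s"
  proof -
    have "real s * real (\<Sum>t\<le>?N. (?N choose t) * fact t * fact (?N + s - t - 1)) = fact (?N + s)"
      using nat_ident[OF assms(2), of ?N] by (metis of_nat_fact of_nat_mult)
    moreover have "real s > 0" using assms by simp
    ultimately have "real (\<Sum>t\<le>?N. (?N choose t) * fact t * fact (?N + s - t - 1)) = fact (?N + s) / real s"
      by (simp add: eq_divide_eq mult.commute)
    then show ?thesis by simp

  qed
  finally show ?thesis .
qed

definition restr :: "(nat \<Rightarrow> nat) \<Rightarrow> nat set \<Rightarrow> nat \<Rightarrow> nat" where
  "restr k A = (\<lambda>j. if j \<in> A then k j else 0)"

lemma supp0_sub: "supp0 n k \<subseteq> {1..n}" by (auto simp: supp0_def)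
lemma finite_supp0: "finite (supp0 n k)" by (rule finite_subset[OF supp0_sub]) simp

lemma count_lemma:
  assumes "finite U"
  shows "card {r. (\<forall>j\<in>U. r j < q) \<and> (\<forall>j. j \<notin> U \<longrightarrow> r j = k j)} = q ^ card U"
proof -
  let ?R = "{r. (\<forall>j\<in>U. r j < q) \<and> (\<forall>j. j \<notin> U \<longrightarrow> r j = k j)}"
  have "bij_betw (\<lambda>r. restrict r U) ?R (PiE U (\<lambda>_. {..<q}))"
  proof (rule bij_betw_byWitness[where f' = "\<lambda>g j. if j \<in> U then g j else k j"])
    show "\<forall>a\<in>?R. (\<lambda>j. if j \<in> U then restrict a U j else k j) = a"
      by (auto simp: fun_eq_iff)
    show "\<forall>a'\<in>PiE U (\<lambda>_. {..<q}). restrict (\<lambda>j. if j \<in> U then a' j else k j) U = a'"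
      by (auto simp: fun_eq_iff PiE_def extensional_def)
    show "(\<lambda>r. restrict r U) ` ?R \<subseteq> PiE U (\<lambda>_. {..<q})" by auto
    show "(\<lambda>g j. if j \<in> U then g j else k j) ` PiE U (\<lambda>_. {..<q}) \<subseteq> ?R" by auto
  qed
  then have "card ?R = card (PiE U (\<lambda>_. {..<q}))" by (rule bij_betw_same_card)
  also have "\<dots> = q ^ card U" using assms by (simp add: card_PiE)
  finally show ?thesis .
qed

lemma Zqn_eq: "Zqn q n = {r. (\<forall>j\<in>{1..n}. r j < q) \<and> (\<forall>j. j \<notin> {1..n} \<longrightarrow> r j = (\<lambda>_. 0) j)}"
  by (auto simp: Zqn_def)

lemma finite_Zqn: assumes "q \<ge> 1" shows "finite (Zqn q n)"
proof -
  have "card (Zqn q n) = q ^ n" unfolding Zqn_eq by (subst count_lemma) auto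
  moreover have "q ^ n > 0" using assms by simp
  ultimately show ?thesis by (metis card.infinite less_irrefl)
qed

lemma qle_set:
  assumes "k \<in> Zqn q n"
  shows "{m \<in> Zqn q n. qle n m k} = restr k ` Pow (supp0 n k)"
proof
  show "{m \<in> Zqn q n. qle n m k} \<subseteq> restr k ` Pow (supp0 n k)"
  proof
    fix m assume m: "m \<in> {m \<in> Zqn q n. qle n m k}"
    have "m = restr k (supp0 n m)"
      using m by (auto simp: fun_eq_iff restr_def supp0_def qle_def Zqn_def)
    moreover have "supp0 n m \<subseteq> supp0 n k"
    proof
      fix x assume x: "x \<in> supp0 n m"
      then have x1: "x \<in> {1..n}" "m x \<noteq> 0" by (auto simp: supp0_def)
      then have "m x = k x \<or> m x = 0" using m by (auto simp: qle_def)
      then show "x \<in> supp0 n k" using x1 by (auto simp: supp0_def)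
    qed
    ultimately show "m \<in> restr k ` Pow (supp0 n k)" by blast
  qed
  show "restr k ` Pow (supp0 n k) \<subseteq> {m \<in> Zqn q n. qle n m k}"
    using assms by (auto simp: restr_def supp0_def qle_def Zqn_def)
qed

lemma inj_restr: "inj_on (restr k) (Pow (supp0 n k))"
proof (rule inj_onI)
  fix A B assume A: "A \<in> Pow (supp0 n k)" and B: "B \<in> Pow (supp0 n k)" and e: "restr k A = restr k B"
  show "A = B"
  proof (rule set_eqI)
    fix j
    have "restr k A j = restr k B j" using e by simp
    then show "j \<in> A \<longleftrightarrow> j \<in> B" using A B by (auto simp: restr_def supp0_def split: if_splits)
  qed
qed

lemma restr_Zqn: "k \<in> Zqn q n \<Longrightarrow> restr k A \<in> Zqn q n"
  by (auto simp: restr_def Zqn_def)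

lemma supp0_restr: "A \<subseteq> supp0 n k \<Longrightarrow> supp0 n (restr k A) = A"
  by (auto simp: restr_def supp0_def)

lemma norm0_diff_restr:
  assumes "A \<subseteq> supp0 n k"
  shows "norm0 n (\<lambda>j. k j - restr k A j) = card (supp0 n k) - card A"
proof -
  have "supp0 n (\<lambda>j. k j - restr k A j) = supp0 n k - A"
    using assms by (auto simp: restr_def supp0_def)
  then show ?thesis unfolding norm0_def using assms
    by (simp add: card_Diff_subset finite_subset[OF assms finite_supp0])
qed

lemma mob_alt:
  assumes "k \<in> Zqn q n"
  shows "mobius q n f k = (\<Sum>A\<in>Pow (supp0 n k). (-1) ^ (card (supp0 n k) - card A) * f (restr k A))"
  unfolding mobius_def qle_set[OF assms] sum.reindex[OF inj_restr]
  by (intro sum.cong refl) (simp add: norm0_diff_restr)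

lemma restr_restr: "B \<subseteq> A \<Longrightarrow> restr (restr r A) B = restr r B"
  by (auto simp: restr_def fun_eq_iff)

lemma restr_self: "r \<in> Zqn q n \<Longrightarrow> restr r (supp0 n r) = r"
  by (auto simp: restr_def fun_eq_iff supp0_def Zqn_def)

lemma L0:
  assumes r: "r \<in> Zqn q n"
  shows "f r = (\<Sum>k\<in>{k\<in>Zqn q n. qle n k r}. mobius q n f k)"
proof -
  let ?S = "supp0 n r"
  let ?F = "\<lambda>B. f (restr r B)"
  have fin: "finite ?S" by (rule finite_supp0)
  have sym: "?F ?S = (\<Sum>T\<in>Pow ?S. (-1) ^ card T * (\<Sum>B\<in>Pow T. (-1) ^ card B * ?F B))"
    by (rule inclusion_exclusion_symmetric[OF _ fin]) simp
  have "(\<Sum>k\<in>{k\<in>Zqn q n. qle n k r}. mobius q n f k) = (\<Sum>A\<in>Pow ?S. mobius q n f (restr r A))"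
    unfolding qle_set[OF r] sum.reindex[OF inj_restr] by simp
  also have "\<dots> = (\<Sum>T\<in>Pow ?S. (-1) ^ card T * (\<Sum>B\<in>Pow T. (-1) ^ card B * ?F B))"
  proof (intro sum.cong refl)
    fix T assume T: "T \<in> Pow ?S"
    have finT: "finite T" using T fin finite_subset by blast
    have ST: "supp0 n (restr r T) = T" using T by (simp add: supp0_restr)
    have "mobius q n f (restr r T) = (\<Sum>B\<in>Pow T. (-1) ^ (card T - card B) * f (restr (restr r T) B))"
      using mob_alt[OF restr_Zqn[OF r, of T], where f=f] unfolding ST .
    also have "\<dots> = (\<Sum>B\<in>Pow T. (-1) ^ (card T - card B) * ?F B)"
      by (intro sum.cong refl) (simp add: restr_restr)
    also have "\<dots> = (\<Sum>B\<in>Pow T. (-1) ^ card T * ((-1) ^ card B * ?F B))"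
    proof (intro sum.cong refl)
      fix B assume "B \<in> Pow T"
      then have "card B \<le> card T" using finT card_mono by blast
      then have "(-1::real) ^ (card T - card B) = (-1) ^ card T * (-1) ^ card B"
        by (simp add: neg_one_power_add_eq_neg_one_power_diff[symmetric] power_add)
      then show "(-1) ^ (card T - card B) * ?F B = (-1) ^ card T * ((-1) ^ card B * ?F B)" by simp
    qed
    also have "\<dots> = (-1) ^ card T * (\<Sum>B\<in>Pow T. (-1) ^ card B * ?F B)"
      by (simp add: sum_distrib_left)
    finally show "mobius q n f (restr r T) = \<dots>" .
  qed
  also have "\<dots> = ?F ?S" using sym by simp
  also have "\<dots> = f r" using restr_self[OF r] by simp
  finally show ?thesis by simp
qed

lemma card_fiber:
  assumes k: "k \<in> Zqn q n" and T: "T \<subseteq> {1..n}"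
  shows "card {r \<in> {r\<in>Zqn q n. \<forall>j\<in>T. r j = 0}. qle n k r} =
         (if supp0 n k \<inter> T = {} then q ^ (card ({1..n} - T) - norm0 n k) else 0)"
proof (cases "supp0 n k \<inter> T = {}")
  case False
  then obtain j where j: "j \<in> supp0 n k" "j \<in> T" by blast
  have "r \<notin> {r \<in> {r\<in>Zqn q n. \<forall>j\<in>T. r j = 0}. qle n k r}" for r
  proof
    assume r: "r \<in> {r \<in> {r\<in>Zqn q n. \<forall>j\<in>T. r j = 0}. qle n k r}"
    have j1: "j \<in> {1..n}" "k j \<noteq> 0" using j by (auto simp: supp0_def)
    have "r j = 0" using r j by auto
    moreover have "k j = r j \<or> k j = 0" using r j1 by (auto simp: qle_def)
    ultimately show False using j1 by simp
  qed
  then have e: "{r \<in> {r\<in>Zqn q n. \<forall>j\<in>T. r j = 0}. qle n k r} = {}" by blast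
  show ?thesis by (simp only: e card.empty if_not_P[OF False])
next
  case True
  let ?U = "{1..n} - T - supp0 n k"
  have eq: "{r \<in> {r\<in>Zqn q n. \<forall>j\<in>T. r j = 0}. qle n k r} =
            {r. (\<forall>j\<in>?U. r j < q) \<and> (\<forall>j. j \<notin> ?U \<longrightarrow> r j = k j)}"
  proof (rule set_eqI, rule iffI)
    fix r assume "r \<in> {r \<in> {r\<in>Zqn q n. \<forall>j\<in>T. r j = 0}. qle n k r}"
    then have r: "r \<in> Zqn q n" "\<forall>j\<in>T. r j = 0" "qle n k r" by auto
    show "r \<in> {r. (\<forall>j\<in>?U. r j < q) \<and> (\<forall>j. j \<notin> ?U \<longrightarrow> r j = k j)}"
    proof (intro CollectI conjI ballI allI impI)
      fix j assume "j \<in> ?U"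
      then show "r j < q" using r(1) by (auto simp: Zqn_def)
    next
      fix j assume "j \<notin> ?U"
      then consider "j \<notin> {1..n}" | "j \<in> T" | "j \<in> supp0 n k" by blast
      then show "r j = k j"
      proof cases
        case 1 then show ?thesis using r(1) k by (auto simp: Zqn_def)
      next
        case 2 then have "j \<notin> supp0 n k" using True by blast
          then show ?thesis using 2 r(2) T by (auto simp: supp0_def)
      next
        case 3
        then have j3: "j \<in> {1..n}" "k j \<noteq> 0" by (auto simp: supp0_def)
        have "k j = r j \<or> k j = 0" using r(3) j3(1) unfolding qle_def by (rule bspec)
        then show ?thesis using j3 by simp
      qed
    qed
  next
    fix r assume r: "r \<in> {r. (\<forall>j\<in>?U. r j < q) \<and> (\<forall>j. j \<notin> ?U \<longrightarrow> r j = k j)}"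
    have "r \<in> Zqn q n"
      unfolding Zqn_def
    proof (intro CollectI conjI ballI allI impI)
      fix j assume j: "j \<in> {1..n}"
      show "r j < q"
      proof (cases "j \<in> ?U")
        case True then show ?thesis using r by auto
      next
        case False then show ?thesis using r k j by (auto simp: Zqn_def)
      qed
    next
      fix j assume j: "j \<notin> {1..n}"
      then show "r j = 0" using r k by (auto simp: Zqn_def)
    qed
    moreover have "\<forall>j\<in>T. r j = 0"
      using r True k by (auto simp: supp0_def Zqn_def)
    moreover have "qle n k r" using r by (auto simp: qle_def supp0_def)
    ultimately show "r \<in> {r \<in> {r\<in>Zqn q n. \<forall>j\<in>T. r j = 0}. qle n k r}" by simp
  qed
  have sub: "supp0 n k \<subseteq> {1..n} - T" using True supp0_sub by blast
  have cU1: "card ?U = card ({1..n} - T) - norm0 n k"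
    unfolding norm0_def using sub by (simp add: card_Diff_subset finite_supp0)
  have cU: "card {r. (\<forall>j\<in>?U. r j < q) \<and> (\<forall>j. j \<notin> ?U \<longrightarrow> r j = k j)} = q ^ card ?U"
    by (rule count_lemma) simp
  show ?thesis unfolding eq cU cU1 using True by simp
qed

lemma L1:
  assumes q: "q \<ge> 2" and T: "T \<subseteq> {1..n}"
  shows "valfun q n f T = (\<Sum>k\<in>Zqn q n. if supp0 n k \<inter> T = {} then mobius q n f k / real q ^ norm0 n k else 0)"
proof -
  have finZ: "finite (Zqn q n)" using q finite_Zqn by simp
  let ?R = "{r\<in>Zqn q n. \<forall>j\<in>T. r j = 0}"
  let ?a = "card ({1..n} - T)"
  have finR: "finite ?R" using finZ by simp
  have "(\<Sum>r\<in>?R. f r) = (\<Sum>r\<in>?R. \<Sum>k\<in>{k\<in>Zqn q n. qle n k r}. mobius q n f k)"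
    by (intro sum.cong refl) (rule L0, simp)
  also have "\<dots> = (\<Sum>k\<in>Zqn q n. \<Sum>r\<in>{r\<in>?R. qle n k r}. mobius q n f k)"
    by (rule sum.swap_restrict[OF finR finZ])
  also have "\<dots> = (\<Sum>k\<in>Zqn q n. real (card {r\<in>?R. qle n k r}) * mobius q n f k)"
    by simp
  finally have e: "(\<Sum>r\<in>?R. f r) = \<dots>" .
  have "valfun q n f T = (\<Sum>k\<in>Zqn q n. (1 / real q ^ ?a) * (real (card {r\<in>?R. qle n k r}) * mobius q n f k))"
    unfolding valfun_def e sum_distrib_left ..
  also have "\<dots> = (\<Sum>k\<in>Zqn q n. if supp0 n k \<inter> T = {} then mobius q n f k / real q ^ norm0 n k else 0)"
  proof (intro sum.cong refl)
    fix k assume k: "k \<in> Zqn q n"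
    show "(1 / real q ^ ?a) * (real (card {r\<in>?R. qle n k r}) * mobius q n f k) =
          (if supp0 n k \<inter> T = {} then mobius q n f k / real q ^ norm0 n k else 0)"
    proof (cases "supp0 n k \<inter> T = {}")
      case True
      have "norm0 n k \<le> ?a" unfolding norm0_def
        using True supp0_sub by (intro card_mono) auto
      then have "real q ^ (?a - norm0 n k) = real q ^ ?a / real q ^ norm0 n k"
        using q by (simp add: power_diff)
      then show ?thesis using True q card_fiber[OF k T] by simp
    next
      case False then show ?thesis using card_fiber[OF k T] by simp
    qed
  qed
  finally show ?thesis .
qed

theorem theorem1:
  fixes q n :: nat and f :: "(nat \<Rightarrow> nat) \<Rightarrow> real" and i :: nat
  assumes "q \<ge> 2" and "n \<ge> 1" and "i \<in> {1..n}"
  shows "shapley q n f i =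
    - (\<Sum>k\<in>{k\<in>Zqn q n. k i \<noteq> 0}.
         mobius q n f k / (real (norm0 n k) * real q ^ norm0 n k))"
proof -
  note q = assms(1) and i = assms(3)
  have finZ: "finite (Zqn q n)" using q finite_Zqn by simp
  let ?D = "{1..n}"
  let ?c = "\<lambda>k. mobius q n f k / real q ^ norm0 n k"
  let ?w = "\<lambda>T. fact (card T) * fact (n - card T - 1) / (fact n :: real)"
  let ?P = "Pow (?D - {i})"
  have iS: "i \<in> supp0 n k \<longleftrightarrow> k i \<noteq> 0" for k using i by (auto simp: supp0_def)
  have diff: "valfun q n f (insert i T) - valfun q n f T =
      - (\<Sum>k\<in>Zqn q n. if k i \<noteq> 0 \<and> supp0 n k \<inter> T = {} then ?c k else 0)" if T: "T \<in> ?P" for T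
  proof -
    have T1: "T \<subseteq> ?D" and T2: "insert i T \<subseteq> ?D" using T i by auto
    show ?thesis
      unfolding L1[OF q T1] L1[OF q T2] sum_subtractf[symmetric] sum_negf[symmetric]
      by (intro sum.cong refl) (auto simp: iS)
  qed
  have "shapley q n f i = (\<Sum>T\<in>?P. ?w T * (- (\<Sum>k\<in>Zqn q n. if k i \<noteq> 0 \<and> supp0 n k \<inter> T = {} then ?c k else 0)))"
    unfolding shapley_def by (intro sum.cong refl) (simp add: diff)
  also have "\<dots> = - (\<Sum>T\<in>?P. \<Sum>k\<in>Zqn q n. ?w T * (if k i \<noteq> 0 \<and> supp0 n k \<inter> T = {} then ?c k else 0))"
    by (simp add: sum_distrib_left sum_negf)
  also have "(\<Sum>T\<in>?P. \<Sum>k\<in>Zqn q n. ?w T * (if k i \<noteq> 0 \<and> supp0 n k \<inter> T = {} then ?c k else 0)) =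
      (\<Sum>k\<in>Zqn q n. \<Sum>T\<in>?P. ?w T * (if k i \<noteq> 0 \<and> supp0 n k \<inter> T = {} then ?c k else 0))"
    by (rule sum.swap)
  also have "\<dots> = (\<Sum>k\<in>Zqn q n. if k i \<noteq> 0 then mobius q n f k / (real (norm0 n k) * real q ^ norm0 n k) else 0)"
  proof (intro sum.cong refl)
    fix k assume k: "k \<in> Zqn q n"
    show "(\<Sum>T\<in>?P. ?w T * (if k i \<noteq> 0 \<and> supp0 n k \<inter> T = {} then ?c k else 0)) =
          (if k i \<noteq> 0 then mobius q n f k / (real (norm0 n k) * real q ^ norm0 n k) else 0)"
    proof (cases "k i \<noteq> 0")
      case False then show ?thesis by simp
    next
      case True
      let ?S = "supp0 n k"
      have iS': "i \<in> ?S" using True iS by simp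
      have "(\<Sum>T\<in>?P. ?w T * (if k i \<noteq> 0 \<and> ?S \<inter> T = {} then ?c k else 0)) =
            (\<Sum>T\<in>?P. if ?S \<inter> T = {} then ?w T * ?c k else 0)"
        using True by (intro sum.cong refl) simp
      also have "\<dots> = (\<Sum>T\<in>{T\<in>?P. ?S \<inter> T = {}}. ?w T * ?c k)"
        by (rule sum.inter_filter[symmetric]) simp
      also have "{T\<in>?P. ?S \<inter> T = {}} = Pow (?D - ?S)"
        using iS' supp0_sub[of n k] by auto
      also have "(\<Sum>T\<in>Pow (?D - ?S). ?w T * ?c k) = (\<Sum>T\<in>Pow (?D - ?S). ?w T) * ?c k"
        by (rule sum_distrib_right[symmetric])
      also have "(\<Sum>T\<in>Pow (?D - ?S). ?w T) = 1 / real (card ?S)"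
      proof -
        have cS: "card ?S \<ge> 1" using iS' finite_supp0[of n k]
          by (metis One_nat_def Suc_leI card_gt_0_iff empty_iff)
        have nn: "card (?D - ?S) + card ?S = n"
          using supp0_sub[of n k] card_mono[OF _ supp0_sub[of n k]] by (simp add: card_Diff_subset finite_supp0)
        show ?thesis
          using weight_sum[OF _ cS, of "?D - ?S"] unfolding nn by simp
      qed
      finally show ?thesis using True by (simp add: norm0_def)
    qed
  qed
  also have "\<dots> = (\<Sum>k\<in>{k\<in>Zqn q n. k i \<noteq> 0}. mobius q n f k / (real (norm0 n k) * real q ^ norm0 n k))"
    by (simp add: sum.inter_filter finZ)
  finally show ?thesis .
qed

end
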